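(* For every positive integer $n$, let $H(n)=\sum_{i=1}^n \frac{1}{i}$ denote the $n$-th harmonic number and let $\gamma$ denote the Euler–Mascheroni constant. Then \[ -\frac{1}{12n^2+\frac{2(7-12\gamma)}{2\gamma-1}}\le H(n)-\ln n-\frac{1}{2n}-\gamma<-\frac{1}{12n^2+\frac{6}{5}}, \] with equality in the left-hand inequality if and only if $n=1$. Moreover, the constants $\frac{2(7-12\gamma)}{2\gamma-1}$ and $\frac{6}{5}$ are the best possible: the former cannot be replaced by any larger constant and the latter cannot be replaced by any smaller constant while keeping the respective inequality valid for all positive integers $n$.
   Context: $\gamma=\lim_{n\to\infty}\bigl(H(n)-\ln n\bigr)=0.57721566\ldots$ is the Euler–Mascheroni constant; $\ln$ is the natural logarithm. *)

theory Defs
  imports "HOL-Analysis.Analysis"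
begin

definition H :: "nat \<Rightarrow> real" where
  "H n = (\<Sum>i=1..n. 1 / real i)"

definition R :: "nat \<Rightarrow> real" where
  "R n = H n - ln (real n) - 1 / (2 * real n) - (euler_mascheroni :: real)"

end

theory Submission imports Defs "HOL-Real_Asymp.Real_Asymp" begin

lemma incr_neg:
  fixes f f' :: "real \<Rightarrow> real"
  assumes d: "\<And>x. x \<ge> 1 \<Longrightarrow> (f has_real_derivative f' x) (at x)"
    and p: "\<And>x. x \<ge> 1 \<Longrightarrow> f' x > 0" and l: "(f \<longlongrightarrow> 0) at_top" and x: "x \<ge> 1"
  shows "f x < 0"
proof -
  have mono: "f a < f b" if ab: "1 \<le> a" "a < b" for a b
  proof (rule DERIV_pos_imp_increasing[OF ab(2)])
    fix t assume t0: "a \<le> t" "t \<le> b"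
    then have t: "t \<ge> 1" using ab(1) by linarith
    show "\<exists>y. DERIV f t :> y \<and> y > 0" using d[OF t] p[OF t] by blast
  qed
  have "f (x+1) \<le> 0"
  proof (rule tendsto_lowerbound[OF l])
    show "\<forall>\<^sub>F i in at_top. f (x + 1) \<le> f i"
      unfolding eventually_at_top_linorder
    proof (rule exI[of _ "x+2"], intro allI impI)
      fix i :: real assume i: "x + 2 \<le> i"
      have "1 \<le> x + 1" "x + 1 < i" using x i by linarith+
      then show "f (x+1) \<le> f i" using mono by (simp add: less_imp_le)
    qed
  qed simp
  have "f x < f (x+1)" using mono[of x "x+1"] x by simp
  then show ?thesis using \<open>f (x+1) \<le> 0\<close> by linarith
qed

lemma U_deriv_pos: fixes x::real assumes "x > 0"
  shows "0 < 1/(x+1) - 1/x + 1/(2*x^2) + 1/(2*(x+1)^2) - 600*x/(60*x^2+6)^2 + 600*(x+1)/(60*(x+1)^2+6)^2"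
proof -
  have s: "0 \<le> x^2" "0 \<le> (x+1)^2" by simp_all
  have A: "60*x^2+6 \<noteq> 0" "60*(x+1)^2+6 \<noteq> 0" "x+1 \<noteq> 0" "x \<noteq> 0"
     "60*x^2+6 > 0" "60*(x+1)^2+6 > 0" "x+1 > 0" using assms s by linarith+
  have p: "0 < 156816 + 570240*x + 3983040*x^2 + 6825600*x^3 + 3412800*x^4"
    using assms by (simp add: add_pos_pos)
  have e: "(60*x^2+6)^2*(60*(x+1)^2+6)^2 - 1200*x^3*(x+1)^2*(60*(x+1)^2+6)^2 + 1200*x^2*(x+1)^3*(60*x^2+6)^2
    = 156816 + 570240*x + 3983040*x^2 + 6825600*x^3 + 3412800*x^4"
    by (simp add: algebra_simps power2_eq_square power3_eq_cube eval_nat_numeral)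
  have "1/(x+1) - 1/x + 1/(2*x^2) + 1/(2*(x+1)^2) - 600*x/(60*x^2+6)^2 + 600*(x+1)/(60*(x+1)^2+6)^2 = 
    ((60*x^2+6)^2*(60*(x+1)^2+6)^2 - 1200*x^3*(x+1)^2*(60*(x+1)^2+6)^2 + 1200*x^2*(x+1)^3*(60*x^2+6)^2)
     / (2*x^2*(x+1)^2*(60*x^2+6)^2*(60*(x+1)^2+6)^2)"
    using A by (simp add: divide_simps) (simp add: algebra_simps power2_eq_square power3_eq_cube)
  also have "\<dots> > 0" unfolding e using p A by (intro divide_pos_pos) auto
  finally show ?thesis .
qed

lemma L_poly: fixes y :: real shows
  "(120*(y+1)^4+12*(y+1)^2-5)^2*(120*(y+2)^4+12*(y+2)^2-5)^2 - 200*((y+1)^2*(y+2)^2)*((24*(y+1)^5+(y+1))*(120*(y+2)^4+12*(y+2)^2-5)^2 - (24*(y+2)^5+(y+2))*(120*(y+1)^4+12*(y+1)^2-5)^2)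
   = -(4980927399 + 36552136944*y + 120162725512*y^2 + 233992194000*y^3 + 300402249784*y^4 + 267681162240*y^5 + 169795529088*y^6 + 77456233728*y^7 + 25420350144*y^8 + 5959526400*y^9 + 978946560*y^10 + 105753600*y^11 + 5875200*y^12)"
  by algebra

lemma frac3: fixes w p q c d :: real assumes "w > 0" "p > 0" "q > 0"
  shows "1/(2*w) - 100*c/p + 100*d/q = (p*q - 200*w*(c*q - d*p))/(2*w*p*q)"
  using assms by (simp add: field_simps)

lemma four_terms: fixes x::real assumes "x > 0"
  shows "1/(x+1) - 1/x + 1/(2*x^2) + 1/(2*(x+1)^2) = 1/(2*(x^2*(x+1)^2))"
proof -
  have nz: "x \<noteq> 0" "x + 1 \<noteq> 0" using assms by linarith+
  have "1/(x+1) - 1/x + 1/(2*x^2) + 1/(2*(x+1)^2) = 1/(2*x^2*(x+1)^2)"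
    using nz by (simp add: divide_simps) (simp add: algebra_simps power2_eq_square)
  then show ?thesis by (simp add: mult.assoc)
qed

lemma L_deriv_neg: fixes x::real assumes x: "x \<ge> 1"
  shows "1/(x+1) - 1/x + 1/(2*x^2) + 1/(2*(x+1)^2) - 100*(24*x^5+x)/(120*x^4+12*x^2-5)^2 + 100*(24*(x+1)^5+(x+1))/(120*(x+1)^4+12*(x+1)^2-5)^2 < 0"
proof -
  have s: "1 \<le> x^2" "1 \<le> (x+1)^2" "1 \<le> x^4" "1 \<le> (x+1)^4" using x by (simp_all add: one_le_power)
  have A: "120*x^4+12*x^2-5 > 0" "120*(x+1)^4+12*(x+1)^2-5 > 0" "x>0"
    using x s by linarith+
  define y where "y = x - 1"
  have y: "y \<ge> 0" using x y_def by simp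
  have xy: "x = y + 1" "x + 1 = y + 2" using y_def by simp_all
  have hs: "0 \<le> y^2" "0 \<le> y^3" "0 \<le> y^4" "0 \<le> y^5" "0 \<le> y^6" "0 \<le> y^7" "0 \<le> y^8"
    "0 \<le> y^9" "0 \<le> y^10" "0 \<le> y^11" "0 \<le> y^12" using y by simp_all
  have p: "0 < 4980927399 + 36552136944*y + 120162725512*y^2 + 233992194000*y^3 + 300402249784*y^4 + 267681162240*y^5 + 169795529088*y^6 + 77456233728*y^7 + 25420350144*y^8 + 5959526400*y^9 + 978946560*y^10 + 105753600*y^11 + 5875200*y^12"
    using y hs by linarith
  have e: "(120*x^4+12*x^2-5)^2*(120*(x+1)^4+12*(x+1)^2-5)^2 - 200*(x^2*(x+1)^2)*((24*x^5+x)*(120*(x+1)^4+12*(x+1)^2-5)^2 - (24*(x+1)^5+(x+1))*(120*x^4+12*x^2-5)^2)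
   = -(4980927399 + 36552136944*y + 120162725512*y^2 + 233992194000*y^3 + 300402249784*y^4 + 267681162240*y^5 + 169795529088*y^6 + 77456233728*y^7 + 25420350144*y^8 + 5959526400*y^9 + 978946560*y^10 + 105753600*y^11 + 5875200*y^12)"
    using L_poly[of y] by (simp only: xy(1)[symmetric] xy(2)[symmetric])
  have P: "x^2*(x+1)^2 > 0" using A by simp
  have u: "(120*x^4+12*x^2-5)^2 > 0" "(120*(x+1)^4+12*(x+1)^2-5)^2 > 0" using A by simp_all
  have "1/(x+1) - 1/x + 1/(2*x^2) + 1/(2*(x+1)^2) - 100*(24*x^5+x)/(120*x^4+12*x^2-5)^2 + 100*(24*(x+1)^5+(x+1))/(120*(x+1)^4+12*(x+1)^2-5)^2
    = 1/(2*(x^2*(x+1)^2)) - 100*(24*x^5+x)/(120*x^4+12*x^2-5)^2 + 100*(24*(x+1)^5+(x+1))/(120*(x+1)^4+12*(x+1)^2-5)^2"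
    using four_terms[OF A(3)] by simp
  also have "\<dots> = ((120*x^4+12*x^2-5)^2*(120*(x+1)^4+12*(x+1)^2-5)^2 - 200*(x^2*(x+1)^2)*((24*x^5+x)*(120*(x+1)^4+12*(x+1)^2-5)^2 - (24*(x+1)^5+(x+1))*(120*x^4+12*x^2-5)^2))
      / (2*(x^2*(x+1)^2)*(120*x^4+12*x^2-5)^2*(120*(x+1)^4+12*(x+1)^2-5)^2)"
    by (rule frac3[OF P u])
  also have "\<dots> < 0" unfolding e using p P u by (intro divide_neg_pos) auto
  finally show ?thesis .
qed

definition dU :: "real \<Rightarrow> real" where
  "dU x = ln(x+1) - ln x - 1/(2*x) - 1/(2*(x+1)) + 5/(60*x^2+6) - 5/(60*(x+1)^2+6)"

definition dL :: "real \<Rightarrow> real" where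
  "dL x = ln(x+1) - ln x - 1/(2*x) - 1/(2*(x+1)) + 10*x^2/(120*x^4+12*x^2-5) - 10*(x+1)^2/(120*(x+1)^4+12*(x+1)^2-5)"

lemma dU_neg: "x \<ge> 1 \<Longrightarrow> dU x < 0"
proof (rule incr_neg[where f = dU])
  show "(dU \<longlongrightarrow> 0) at_top" unfolding dU_def by real_asymp
  fix x :: real assume x: "x \<ge> 1"
  have s: "0 \<le> x^2" "0 \<le> (x+1)^2" by simp_all
  have A: "60*x^2+6 \<noteq> 0" "60*(x+1)^2+6 \<noteq> 0" "x+1 \<noteq> 0" "x \<noteq> 0" "x+1>0" "x>0"
    using x s by linarith+
  show "(dU has_real_derivative (1/(x+1) - 1/x + 1/(2*x^2) + 1/(2*(x+1)^2) - 600*x/(60*x^2+6)^2 + 600*(x+1)/(60*(x+1)^2+6)^2)) (at x)"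
    unfolding dU_def
    apply (intro derivative_eq_intros refl)
    using A apply (simp_all only: A simp_thms)
    using A apply simp_all
    apply (simp add: divide_simps)
    apply (simp add: algebra_simps power2_eq_square)
    done
  show "0 < 1/(x+1) - 1/x + 1/(2*x^2) + 1/(2*(x+1)^2) - 600*x/(60*x^2+6)^2 + 600*(x+1)/(60*(x+1)^2+6)^2"
    using x by (intro U_deriv_pos) simp
qed

lemma base_deriv: fixes x :: real assumes x: "x \<ge> 1"
  shows "((\<lambda>x. ln(x+1) - ln x - 1/(2*x) - 1/(2*(x+1))) has_real_derivative (1/(x+1) - 1/x + 1/(2*x^2) + 1/(2*(x+1)^2))) (at x)"
proof -
  have A: "x+1 \<noteq> 0" "x \<noteq> 0" "x+1>0" "x>0" using x by linarith+
  show ?thesis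
    apply (intro derivative_eq_intros refl)
    using A apply (simp_all only: A simp_thms)
    using A apply simp_all
    apply (simp add: divide_simps)
    apply (simp add: algebra_simps power2_eq_square)
    done
qed

lemma q_deriv: fixes x :: real assumes x: "x \<ge> 1"
  shows "((\<lambda>x. 10*x^2/(120*x^4+12*x^2-5)) has_real_derivative - (100*(24*x^5+x)/(120*x^4+12*x^2-5)^2)) (at x)"
proof -
  have s: "1 \<le> x^2" "1 \<le> x^4" using x by (simp_all add: one_le_power)
  have E: "120*x^4+12*x^2-5 \<noteq> 0" using s by linarith
  have d1: "((\<lambda>x. 10*x^2) has_real_derivative 20*x) (at x)"
    apply (intro derivative_eq_intros refl)
    apply (simp_all only: simp_thms)
    apply (simp add: algebra_simps)
    done
  have d2: "((\<lambda>x. 120*x^4+12*x^2-5) has_real_derivative 480*x^3+24*x) (at x)"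
    apply (intro derivative_eq_intros refl)
    apply (simp_all only: simp_thms)
    apply (simp add: algebra_simps)
    done
  have h: "((\<lambda>x. 10*x^2/(120*x^4+12*x^2-5)) has_real_derivative
      (20*x * (120*x^4+12*x^2-5) - ((480*x^3+24*x) * (10*x^2))) / ((120*x^4+12*x^2-5) ^ Suc (Suc 0))) (at x)"
    by (rule DERIV_quotient[OF d1 d2 E])
  have num: "20*x * (120*x^4+12*x^2-5) - ((480*x^3+24*x) * (10*x^2)) = - (100*(24*x^5+x))"
    by (simp add: algebra_simps power2_eq_square eval_nat_numeral)
  have p2: "(120*x^4+12*x^2-5) ^ Suc (Suc 0) = (120*x^4+12*x^2-5)^2" by (simp only: numeral_2_eq_2)
  have eqV: "(20*x * (120*x^4+12*x^2-5) - ((480*x^3+24*x) * (10*x^2))) / ((120*x^4+12*x^2-5) ^ Suc (Suc 0))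
     = - (100*(24*x^5+x)/(120*x^4+12*x^2-5)^2)"
    unfolding num p2 by (rule minus_divide_left[symmetric])
  show ?thesis using h unfolding eqV .
qed

lemma qshift_deriv: fixes x :: real assumes x: "x \<ge> 1"
  shows "((\<lambda>x. 10*(x+1)^2/(120*(x+1)^4+12*(x+1)^2-5)) has_real_derivative - (100*(24*(x+1)^5+(x+1))/(120*(x+1)^4+12*(x+1)^2-5)^2)) (at x)"
proof -
  have "x + 1 \<ge> 1" using x by simp
  from q_deriv[OF this] show ?thesis by (simp only: DERIV_shift)
qed

lemma dL_pos: "x \<ge> 1 \<Longrightarrow> dL x > 0"
proof -
  assume x0: "x \<ge> 1"
  have "(\<lambda>x. - dL x) x < 0"
  proof (rule incr_neg[where f = "\<lambda>x. - dL x"])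
    show "((\<lambda>x. - dL x) \<longlongrightarrow> 0) at_top" unfolding dL_def by real_asymp
    fix x :: real assume x: "x \<ge> 1"
    have "(dL has_real_derivative
      (1/(x+1) - 1/x + 1/(2*x^2) + 1/(2*(x+1)^2) + - (100*(24*x^5+x)/(120*x^4+12*x^2-5)^2)) - - (100*(24*(x+1)^5+(x+1))/(120*(x+1)^4+12*(x+1)^2-5)^2)) (at x)"
      unfolding dL_def by (rule DERIV_diff[OF DERIV_add[OF base_deriv[OF x] q_deriv[OF x]] qshift_deriv[OF x]])
    then have "(dL has_real_derivative
      (1/(x+1) - 1/x + 1/(2*x^2) + 1/(2*(x+1)^2) - 100*(24*x^5+x)/(120*x^4+12*x^2-5)^2 + 100*(24*(x+1)^5+(x+1))/(120*(x+1)^4+12*(x+1)^2-5)^2)) (at x)"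
      by (simp only: diff_minus_eq_add add_uminus_conv_diff)
    then show "((\<lambda>x. - dL x) has_real_derivative
      - (1/(x+1) - 1/x + 1/(2*x^2) + 1/(2*(x+1)^2) - 100*(24*x^5+x)/(120*x^4+12*x^2-5)^2 + 100*(24*(x+1)^5+(x+1))/(120*(x+1)^4+12*(x+1)^2-5)^2)) (at x)"
      by (rule DERIV_minus)
    show "0 < - (1/(x+1) - 1/x + 1/(2*x^2) + 1/(2*(x+1)^2) - 100*(24*x^5+x)/(120*x^4+12*x^2-5)^2 + 100*(24*(x+1)^5+(x+1))/(120*(x+1)^4+12*(x+1)^2-5)^2)"
      using L_deriv_neg[OF x] by linarith
  qed (rule x0)
  then show ?thesis by simp
qed

lemma seq_neg:
  fixes S :: "nat \<Rightarrow> real"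
  assumes inc: "\<And>k. k \<ge> 1 \<Longrightarrow> S k < S (Suc k)" and lim: "S \<longlonglongrightarrow> 0" and n: "n \<ge> 1"
  shows "S n < 0"
proof -
  have mono: "S (Suc n) \<le> S m" if "Suc n \<le> m" for m
    using that
  proof (induction m rule: dec_induct)
    case base then show ?case by simp
  next
    case (step m)
    then have "S m < S (Suc m)" using inc[of m] by simp
    with step show ?case by simp
  qed
  have "S (Suc n) \<le> 0"
    by (rule LIMSEQ_le_const[OF lim]) (use mono in blast)
  with inc[OF n] show ?thesis by simp
qed

lemma H_Suc: "H (Suc k) = H k + 1/(real k + 1)"
  by (simp add: H_def add.commute)

lemma R_diff: assumes "k \<ge> 1"
  shows "R k - R (Suc k) = ln(real k+1) - ln(real k) - 1/(2*real k) - 1/(2*(real k+1))"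
proof -
  have r: "real (Suc k) = real k + 1" by simp
  have kp: "real k + 1 \<noteq> 0" by simp
  have h2: "1/(real k + 1) = 2 * (1/(2*(real k+1)))" using kp by (simp add: divide_simps)
  have gen: "\<And>A B C D G L::real. A - L - C - G - (A + 2*D - B - D - G) = B - L - C - D" by simp
  show ?thesis unfolding R_def r H_Suc h2 by (rule gen)
qed

lemma R_lim: "R \<longlonglongrightarrow> 0"
proof -
  have e: "R n = (harm n - ln (real n)) - 1/(2*real n) - euler_mascheroni" for n
    by (simp add: R_def H_def harm_def inverse_eq_divide)
  have l1: "(\<lambda>n. harm n - ln (of_nat n) :: real) \<longlonglongrightarrow> euler_mascheroni"
    by (rule euler_mascheroni_LIMSEQ)
  have l2: "(\<lambda>n. 1/(2*real n)) \<longlonglongrightarrow> 0" by real_asymp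
  have "(\<lambda>n. (harm n - ln (real n)) - 1/(2*real n) - euler_mascheroni) \<longlonglongrightarrow> euler_mascheroni - 0 - euler_mascheroni"
    using l1 l2 by (intro tendsto_intros) auto
  then show ?thesis unfolding e by simp
qed

lemma UB: assumes n: "n \<ge> 1" shows "R n < - (5 / (60 * real n ^ 2 + 6))"
proof -
  define S where "S k = R k + 5/(60*real k^2+6)" for k
  have "S k < S (Suc k)" if k: "k \<ge> 1" for k
  proof -
    have r: "real (Suc k) = real k + 1" by simp
    have gen: "\<And>r r' f f' d::real. r - r' = d \<Longrightarrow> r + f - (r' + f') = d + f - f'" by simp
    have "S k - S (Suc k) = dU (real k)"
      unfolding S_def dU_def r by (rule gen[OF R_diff[OF k]])
    then show ?thesis using dU_neg[of "real k"] k by simp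
  qed
  moreover have "S \<longlonglongrightarrow> 0"
  proof -
    have "(\<lambda>k. 5/(60*real k^2+6)) \<longlonglongrightarrow> 0" by real_asymp
    from tendsto_add[OF R_lim this] show ?thesis unfolding S_def by simp
  qed
  ultimately have "S n < 0" using seq_neg n by blast
  then show ?thesis by (simp add: S_def)
qed

lemma LB: assumes n: "n \<ge> 1" shows "- (10 * real n ^ 2 / (120 * real n ^ 4 + 12 * real n ^ 2 - 5)) < R n"
proof -
  define S where "S k = - (R k + 10 * real k ^ 2 / (120 * real k ^ 4 + 12 * real k ^ 2 - 5))" for k
  have "S k < S (Suc k)" if k: "k \<ge> 1" for k
  proof -
    have r: "real (Suc k) = real k + 1" by simp
    have gen: "\<And>r r' f f' d::real. r - r' = d \<Longrightarrow> - (r + f) - - (r' + f') = - (d + f - f')" by simp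
    have "S k - S (Suc k) = - dL (real k)"
      unfolding S_def dL_def r by (rule gen[OF R_diff[OF k]])
    then show ?thesis using dL_pos[of "real k"] k by simp
  qed
  moreover have "S \<longlonglongrightarrow> 0"
  proof -
    have "(\<lambda>k. 10 * real k ^ 2 / (120 * real k ^ 4 + 12 * real k ^ 2 - 5)) \<longlonglongrightarrow> 0" by real_asymp
    from tendsto_minus[OF tendsto_add[OF R_lim this]] show ?thesis unfolding S_def by simp
  qed
  ultimately have "S n < 0" using seq_neg n by blast
  then show ?thesis by (simp add: S_def)
qed

lemma ln2_upper: "ln (2::real) \<le> 6932/10000"
  using ln_approx_bounds[of 2 3] by (simp add: eval_nat_numeral)

theorem theorem1:
  defines "a \<equiv> 2 * (7 - 12 * (euler_mascheroni::real)) / (2 * euler_mascheroni - 1)"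
  shows "(\<forall>n::nat. n \<ge> 1 \<longrightarrow>
            - 1 / (12 * real n ^ 2 + a) \<le> R n \<and> R n < - 1 / (12 * real n ^ 2 + 6 / 5))
       \<and> (\<forall>n::nat. n \<ge> 1 \<longrightarrow> (R n = - 1 / (12 * real n ^ 2 + a) \<longleftrightarrow> n = 1))
       \<and> (\<forall>a'::real. a' > a \<longrightarrow>
            \<not> (\<forall>n::nat. n \<ge> 1 \<longrightarrow> - 1 / (12 * real n ^ 2 + a') \<le> R n))
       \<and> (\<forall>b'::real. b' < 6 / 5 \<longrightarrow>
            \<not> (\<forall>n::nat. n \<ge> 1 \<longrightarrow> R n < - 1 / (12 * real n ^ 2 + b')))"
proof -
  define g where "g = (euler_mascheroni::real)"
  have a_def': "a = 2 * (7 - 12 * g) / (2 * g - 1)" unfolding a_def g_def by simp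
  have R1: "R 1 = 1/2 - g" by (simp add: R_def H_def g_def)
  have H2: "H 2 = 3/2" using H_Suc[of 1] by (simp add: H_def eval_nat_numeral)
  have R2: "R 2 = 5/4 - ln 2 - g" by (simp add: R_def H2 g_def)
  have u2: "R 2 < - 5 / 246" using UB[of 2] by simp
  have g_lo: "g > 603/1046" using R2 u2 ln2_upper by argo
  have g_hi: "g < 13/22" unfolding g_def by (rule euler_mascheroni_less_13_over_22)
  have pos: "2*g - 1 > 0" using g_lo by argo
  have nz: "2*g - 1 \<noteq> 0" using pos by (linarith | argo)
  have a_le: "a \<le> 43/40"
  proof -
    have "2 * (7 - 12 * g) \<le> 43/40 * (2 * g - 1)" using g_lo by argo
    then show ?thesis unfolding a_def' using pos by (simp add: pos_divide_le_eq)
  qed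
  have a_gt: "a > -12"
  proof -
    have "-12 * (2 * g - 1) < 2 * (7 - 12 * g)" by argo
    then show ?thesis unfolding a_def' using pos by (simp add: pos_less_divide_eq)
  qed
  have a12: "12 + a = 2/(2*g-1)" unfolding a_def' using nz by (simp add: field_simps)
  have eq1: "R 1 = -1/(12 + a)" unfolding R1 a12 using nz by (simp add: field_simps)
  have low2: "-1/(12*real n^2+a) < R n" if n: "n \<ge> 2" for n
  proof -
    define t where "t = real n ^ 2"
    have t4: "t \<ge> 4"
    proof -
      have "real n \<ge> 2" using n by simp
      then have "real n * real n \<ge> 2 * 2" by (intro mult_mono) auto
      then show ?thesis unfolding t_def by (simp add: power2_eq_square)
    qed
    have LBn: "- (10 * t / (120 * t^2 + 12 * t - 5)) < R n" using LB[of n] n by (simp add: t_def power_mult[symmetric])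
    have t2: "t^2 \<ge> 0" by simp
    have Ep: "120 * t^2 + 12 * t - 5 > 0" using t4 t2 by (linarith | argo)
    have Dp: "12*t + a > 0" using t4 a_gt by (linarith | argo)
    have a40: "40 * a \<le> 43" using a_le by simp
    have ta0: "t * (40 * a) \<le> t * 43" using a40 t4 by (intro mult_left_mono) auto
    have ta: "40 * (t * a) \<le> 43 * t" using ta0 by (simp add: algebra_simps)
    have eq: "10*t*(12*t+a) = 120*t^2 + 10*(t*a)" by (simp add: algebra_simps power2_eq_square)
    have gen: "\<And>L X Y t::real. L = 120*Y + 10*X \<Longrightarrow> 40*X \<le> 43*t \<Longrightarrow> 4 \<le> t \<Longrightarrow> L \<le> 120*Y + 12*t - 5"
      by linarith
    have "10*t*(12*t+a) \<le> 120 * t^2 + 12 * t - 5"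
      by (rule gen[OF eq ta t4])
    then have "10 * t / (120 * t^2 + 12 * t - 5) \<le> 1/(12*t+a)"
      using Ep Dp by (simp add: divide_simps)
    then have "- (1/(12*t+a)) < R n" using LBn by (linarith | argo)
    then show ?thesis unfolding t_def by simp
  qed
  have part1: "\<forall>n::nat. n \<ge> 1 \<longrightarrow> - 1 / (12 * real n ^ 2 + a) \<le> R n \<and> R n < - 1 / (12 * real n ^ 2 + 6 / 5)"
  proof (intro allI impI conjI)
    fix n :: nat assume n: "n \<ge> 1"
    show "- 1 / (12 * real n ^ 2 + a) \<le> R n"
    proof (cases "n = 1")
      case True then show ?thesis using eq1 by simp
    next
      case False then show ?thesis using low2[of n] n by simp
    qed
    have q: "12 * real n ^ 2 + 6 / 5 > 0" "60 * real n ^ 2 + 6 > 0" by (simp_all add: add_nonneg_pos)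
    have e: "- 1 / (12 * real n ^ 2 + 6 / 5) = - (5 / (60 * real n ^ 2 + 6))"
      using q by (simp add: field_simps)
    show "R n < - 1 / (12 * real n ^ 2 + 6 / 5)" unfolding e using UB[OF n] .
  qed
  have part2: "\<forall>n::nat. n \<ge> 1 \<longrightarrow> (R n = - 1 / (12 * real n ^ 2 + a) \<longleftrightarrow> n = 1)"
  proof (intro allI impI)
    fix n :: nat assume n: "n \<ge> 1"
    show "(R n = - 1 / (12 * real n ^ 2 + a) \<longleftrightarrow> n = 1)"
    proof (cases "n = 1")
      case True then show ?thesis using eq1 by simp
    next
      case False then show ?thesis using low2[of n] n by auto
    qed
  qed
  have part3: "\<forall>a'::real. a' > a \<longrightarrow> \<not> (\<forall>n::nat. n \<ge> 1 \<longrightarrow> - 1 / (12 * real n ^ 2 + a') \<le> R n)"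
  proof (intro allI impI notI)
    fix a' :: real assume a': "a' > a" and H: "\<forall>n::nat. n \<ge> 1 \<longrightarrow> - 1 / (12 * real n ^ 2 + a') \<le> R n"
    have "- 1 / (12 + a') \<le> R 1" using H[rule_format, of 1] by simp
    moreover have "1 / (12 + a') < 1 / (12 + a)"
      using a' a_gt by (intro divide_strict_left_mono) auto
    moreover have "-1/(12+a') = -(1/(12+a'))" "-1/(12+a) = -(1/(12+a))" by simp_all
    ultimately show False using eq1 by (linarith | argo)
  qed
  have part4: "\<forall>b'::real. b' < 6 / 5 \<longrightarrow> \<not> (\<forall>n::nat. n \<ge> 1 \<longrightarrow> R n < - 1 / (12 * real n ^ 2 + b'))"
  proof (intro allI impI notI)
    fix b' :: real assume b': "b' < 6/5" and H: "\<forall>n::nat. n \<ge> 1 \<longrightarrow> R n < - 1 / (12 * real n ^ 2 + b')"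
    define \<epsilon> where "\<epsilon> = 6/5 - b'"
    have ep: "\<epsilon> > 0" using b' \<epsilon>_def by simp
    obtain m :: nat where m: "1/\<epsilon> + \<bar>b'\<bar> < real m" using reals_Archimedean2 by blast
    define n where "n = Suc m"
    have n1: "n \<ge> 1" unfolding n_def by simp
    define t where "t = real n ^ 2"
    have nt: "real n \<le> t" unfolding t_def using n1 by (simp add: power2_eq_square)
    have mn: "real m < real n" unfolding n_def by simp
    have ie: "1/\<epsilon> > 0" using ep by simp
    have t1: "1/\<epsilon> < t" using m mn nt abs_ge_zero[of b'] by (linarith | argo)
    have tb: "\<bar>b'\<bar> < t" using m mn nt ie by (linarith | argo)
    have te: "1 < t * \<epsilon>" using t1 ep by (simp add: pos_divide_less_eq)
    have t_ge: "t \<ge> 1" using nt n1 by simp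
    have LBn: "- (10 * t / (120 * t^2 + 12 * t - 5)) < R n" using LB[OF n1] by (simp add: t_def power_mult[symmetric])
    have t2: "t^2 \<ge> 0" by simp
    have Ep: "120 * t^2 + 12 * t - 5 > 0" using t_ge t2 by (linarith | argo)
    have Dp: "12*t + b' > 0" using tb t_ge by (linarith | argo)
    have eqb: "10*t*(12*t+b') = 120*t^2 + 10*(t*b')" by (simp add: algebra_simps power2_eq_square)
    have eqe: "t * \<epsilon> = 6/5 * t - t * b'" unfolding \<epsilon>_def by (simp add: algebra_simps)
    have gen: "\<And>L X Y Z t::real. L = 120*Y + 10*X \<Longrightarrow> Z = 6/5 * t - X \<Longrightarrow> 1 < Z \<Longrightarrow> L \<le> 120*Y + 12*t - 5"
      by linarith
    have "10*t*(12*t+b') \<le> 120 * t^2 + 12 * t - 5" by (rule gen[OF eqb eqe te])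
    then have f1: "10 * t / (120 * t^2 + 12 * t - 5) \<le> 1/(12*t+b')"
      using Ep Dp by (simp add: divide_simps)
    have f2: "R n < - 1 / (12 * t + b')" using H[rule_format, OF n1] unfolding t_def by simp
    have f3: "-1/(12*t+b') = -(1/(12*t+b'))" by simp
    have gen2: "\<And>A B C r::real. A \<le> B \<Longrightarrow> r < C \<Longrightarrow> C = - B \<Longrightarrow> - A < r \<Longrightarrow> False"
      by linarith
    show False by (rule gen2[OF f1 f2 f3 LBn])
  qed
  show ?thesis using part1 part2 part3 part4 by blast
qed

end
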